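(* Let $(E,\mu)$ and $(F,\nu)$ be fuzzy Riesz spaces and let $T:E\rightarrow F$ be a fuzzy Riesz homomorphism, with kernel $\mathrm{Ker}(T)=\{x\in E: Tx=0\}$. Then: (1) For $x\in E$: $\nu(0,Tx)>\frac12$ if and only if there exists $z\in \mathrm{Ker}(T)$ with $\mu(0,z)>\frac12$ and $\mu(0,x+z)>\frac12$. Consequently, for $x,y\in E$: $\nu(Ty,Tx)>\frac12$ if and only if there exists $w\in E$ with $\mu(x,w)>\frac12$, $\mu(y,w)>\frac12$ and $Tw=Tx$. (2) For $x,y\in E$: $\nu(|Tx|,|Ty|)>\frac12$ if and only if there exists $w\in \mathrm{Ker}(T)$ with $\mu(|w|,|x|)>\frac12$ and $\mu(|x-w|,|y|)>\frac12$.
   Context: A fuzzy order on a real vector space $E$ is a map $\mu:E\times E\to[0,1]$ with $\mu(x,x)=1$ for all $x$; $\mu(x,y)+\mu(y,x)>1$ implies $x=y$; and $\mu(x,z)\ge\sup_{y\in E}\min(\mu(x,y),\mu(y,z))$. Write $x\le y$ for $\mu(x,y)>\frac12$. For $A\subseteq E$, $y$ is an upper bound of $A$ if $x\le y$ for all $x\in A$; $z=\sup A$ if $z$ is an upper bound of $A$ and $z\le y$ for every upper bound $y$ of $A$; lower bounds and $\inf$ are defined dually. $(E,\mu)$ is a fuzzy ordered linear space if $\mu(x_1,x_2)>\frac12$ implies $\mu(x_1,x_2)\le\mu(x_1+x,x_2+x)$ for all $x\in E$ and $\mu(x_1,x_2)\le\mu(\alpha x_1,\alpha x_2)$ for all real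 $\alpha>0$. It is a fuzzy Riesz space if in addition $x\vee y=\sup\{x,y\}$ and $x\wedge y=\inf\{x,y\}$ exist for all $x,y$. Put $x^+=x\vee 0$, $x^-=(-x)\vee0$, $|x|=x\vee(-x)$. A fuzzy Riesz homomorphism between fuzzy Riesz spaces is a linear map $T$ with $T(x\vee y)=Tx\vee Ty$ for all $x,y$. *)

theory Defs
  imports Complex_Main
begin

definition fuzzy_order :: "('a \<Rightarrow> 'a \<Rightarrow> real) \<Rightarrow> bool" where
  "fuzzy_order \<mu> \<longleftrightarrow>
     (\<forall>x y. 0 \<le> \<mu> x y \<and> \<mu> x y \<le> 1) \<and>
     (\<forall>x. \<mu> x x = 1) \<and>
     (\<forall>x y. \<mu> x y + \<mu> y x > 1 \<longrightarrow> x = y) \<and>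
     (\<forall>x z. \<mu> x z \<ge> Sup {min (\<mu> x y) (\<mu> y z) | y. True})"

definition fle :: "('a \<Rightarrow> 'a \<Rightarrow> real) \<Rightarrow> 'a \<Rightarrow> 'a \<Rightarrow> bool" where
  "fle \<mu> x y \<longleftrightarrow> \<mu> x y > 1/2"

definition is_fupper :: "('a \<Rightarrow> 'a \<Rightarrow> real) \<Rightarrow> 'a set \<Rightarrow> 'a \<Rightarrow> bool" where
  "is_fupper \<mu> A y \<longleftrightarrow> (\<forall>x\<in>A. fle \<mu> x y)"

definition is_flower :: "('a \<Rightarrow> 'a \<Rightarrow> real) \<Rightarrow> 'a set \<Rightarrow> 'a \<Rightarrow> bool" where
  "is_flower \<mu> A y \<longleftrightarrow> (\<forall>x\<in>A. fle \<mu> y x)"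

definition is_fsup :: "('a \<Rightarrow> 'a \<Rightarrow> real) \<Rightarrow> 'a set \<Rightarrow> 'a \<Rightarrow> bool" where
  "is_fsup \<mu> A z \<longleftrightarrow> is_fupper \<mu> A z \<and> (\<forall>y. is_fupper \<mu> A y \<longrightarrow> fle \<mu> z y)"

definition is_finf :: "('a \<Rightarrow> 'a \<Rightarrow> real) \<Rightarrow> 'a set \<Rightarrow> 'a \<Rightarrow> bool" where
  "is_finf \<mu> A z \<longleftrightarrow> is_flower \<mu> A z \<and> (\<forall>y. is_flower \<mu> A y \<longrightarrow> fle \<mu> y z)"

definition fuzzy_ordered_linear_space :: "('a::real_vector \<Rightarrow> 'a \<Rightarrow> real) \<Rightarrow> bool" where
  "fuzzy_ordered_linear_space \<mu> \<longleftrightarrow> fuzzy_order \<mu> \<and>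
     (\<forall>x1 x2 x. \<mu> x1 x2 > 1/2 \<longrightarrow> \<mu> x1 x2 \<le> \<mu> (x1 + x) (x2 + x)) \<and>
     (\<forall>x1 x2 (\<alpha>::real). \<mu> x1 x2 > 1/2 \<and> \<alpha> > 0 \<longrightarrow> \<mu> x1 x2 \<le> \<mu> (\<alpha> *\<^sub>R x1) (\<alpha> *\<^sub>R x2))"

definition fuzzy_riesz_space :: "('a::real_vector \<Rightarrow> 'a \<Rightarrow> real) \<Rightarrow> bool" where
  "fuzzy_riesz_space \<mu> \<longleftrightarrow> fuzzy_ordered_linear_space \<mu> \<and>
     (\<forall>x y. (\<exists>z. is_fsup \<mu> {x, y} z) \<and> (\<exists>z. is_finf \<mu> {x, y} z))"

text \<open>x \<or> y and x \<and> y (unique by antisymmetry of the fuzzy order).\<close>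
definition fsup :: "('a \<Rightarrow> 'a \<Rightarrow> real) \<Rightarrow> 'a \<Rightarrow> 'a \<Rightarrow> 'a" where
  "fsup \<mu> x y = (THE z. is_fsup \<mu> {x, y} z)"

definition finf :: "('a \<Rightarrow> 'a \<Rightarrow> real) \<Rightarrow> 'a \<Rightarrow> 'a \<Rightarrow> 'a" where
  "finf \<mu> x y = (THE z. is_finf \<mu> {x, y} z)"

definition fabs :: "('a::real_vector \<Rightarrow> 'a \<Rightarrow> real) \<Rightarrow> 'a \<Rightarrow> 'a" where
  "fabs \<mu> x = fsup \<mu> x (- x)"

definition fuzzy_riesz_hom ::
  "('a::real_vector \<Rightarrow> 'a \<Rightarrow> real) \<Rightarrow> ('b::real_vector \<Rightarrow> 'b \<Rightarrow> real) \<Rightarrow> ('a \<Rightarrow> 'b) \<Rightarrow> bool" where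
  "fuzzy_riesz_hom \<mu> \<nu> T \<longleftrightarrow> linear T \<and> (\<forall>x y. T (fsup \<mu> x y) = fsup \<nu> (T x) (T y))"

end

theory Submission
  imports Defs
begin

locale frs =
  fixes \<mu> :: "'a::real_vector \<Rightarrow> 'a \<Rightarrow> real"
  assumes frs: "fuzzy_riesz_space \<mu>"
begin

lemma fo: "fuzzy_order \<mu>"
  using frs unfolding fuzzy_riesz_space_def fuzzy_ordered_linear_space_def by blast

lemma le_refl: "fle \<mu> x x"
  using fo unfolding fuzzy_order_def fle_def by simp

lemma le_antisym: "fle \<mu> x y \<Longrightarrow> fle \<mu> y x \<Longrightarrow> x = y"
  using fo unfolding fuzzy_order_def fle_def by fastforce

lemma le_trans:
  assumes "fle \<mu> x y" "fle \<mu> y z" shows "fle \<mu> x z"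
proof -
  have b: "\<forall>x y. 0 \<le> \<mu> x y \<and> \<mu> x y \<le> 1" and s: "\<mu> x z \<ge> Sup {min (\<mu> x y) (\<mu> y z) | y. True}"
    using fo unfolding fuzzy_order_def by blast+
  have "bdd_above {min (\<mu> x y) (\<mu> y z) | y. True}"
    using b by (intro bdd_aboveI[where M=1]) (auto simp: min_le_iff_disj)
  then have "min (\<mu> x y) (\<mu> y z) \<le> Sup {min (\<mu> x y) (\<mu> y z) | y. True}"
    by (intro cSup_upper) auto
  with s assms show ?thesis unfolding fle_def by linarith
qed

lemma le_add: "fle \<mu> x y \<Longrightarrow> fle \<mu> (x + c) (y + c)"
  using frs unfolding fuzzy_riesz_space_def fuzzy_ordered_linear_space_def fle_def
  by (meson less_le_trans)

lemma le_add_iff: "fle \<mu> (x + c) (y + c) \<longleftrightarrow> fle \<mu> x y"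
  using le_add[of "x + c" "y + c" "- c"] le_add[of x y c] by auto

lemma le_add_iff2: "fle \<mu> x y \<longleftrightarrow> fle \<mu> (x + c) (y + c)"
  using le_add_iff by simp

lemma le_scale: "fle \<mu> x y \<Longrightarrow> (a::real) > 0 \<Longrightarrow> fle \<mu> (a *\<^sub>R x) (a *\<^sub>R y)"
  using frs unfolding fuzzy_riesz_space_def fuzzy_ordered_linear_space_def fle_def
  by (meson less_le_trans)

lemma le_add_both: "fle \<mu> a b \<Longrightarrow> fle \<mu> c d \<Longrightarrow> fle \<mu> (a + c) (b + d)"
  using le_add[of a b c] le_add[of c d b] le_trans by (simp add: add.commute)

lemma sup_ex: "\<exists>z. is_fsup \<mu> {x, y} z"
  using frs unfolding fuzzy_riesz_space_def by blast

lemma sup_uniq: "is_fsup \<mu> A z \<Longrightarrow> is_fsup \<mu> A z' \<Longrightarrow> z = z'"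
  unfolding is_fsup_def using le_antisym by blast

lemma sup_is: "is_fsup \<mu> {x, y} (fsup \<mu> x y)"
  unfolding fsup_def using sup_ex sup_uniq by (metis theI)

lemma sup_eq: "is_fsup \<mu> {x, y} z \<Longrightarrow> fsup \<mu> x y = z"
  using sup_is sup_uniq by blast

lemma ub1: "fle \<mu> x (fsup \<mu> x y)"
  using sup_is unfolding is_fsup_def is_fupper_def by blast

lemma ub2: "fle \<mu> y (fsup \<mu> x y)"
  using sup_is unfolding is_fsup_def is_fupper_def by blast

lemma sup_least: "fle \<mu> x u \<Longrightarrow> fle \<mu> y u \<Longrightarrow> fle \<mu> (fsup \<mu> x y) u"
  using sup_is unfolding is_fsup_def is_fupper_def by blast

lemma sup_eq_left: "fle \<mu> y x \<Longrightarrow> fsup \<mu> x y = x"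
  by (intro sup_eq) (auto simp: is_fsup_def is_fupper_def le_refl)

lemma sup_eq_right: "fle \<mu> x y \<Longrightarrow> fsup \<mu> x y = y"
  by (intro sup_eq) (auto simp: is_fsup_def is_fupper_def le_refl)

lemma sup_comm: "fsup \<mu> x y = fsup \<mu> y x"
  unfolding fsup_def by (simp add: insert_commute)

lemma sup_translate: "fsup \<mu> (a + c) (b + c) = fsup \<mu> a b + c"
proof (intro sup_eq)
  show "is_fsup \<mu> {a + c, b + c} (fsup \<mu> a b + c)"
    unfolding is_fsup_def is_fupper_def
  proof (intro conjI allI impI ballI)
    fix x assume "x \<in> {a + c, b + c}"
    then show "fle \<mu> x (fsup \<mu> a b + c)" using ub1 ub2 le_add_iff by auto
  next
    fix u assume "\<forall>x\<in>{a + c, b + c}. fle \<mu> x u"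
    then have "fle \<mu> (a + c) (u - c + c)" "fle \<mu> (b + c) (u - c + c)" by auto
    then have "fle \<mu> a (u - c)" "fle \<mu> b (u - c)" using le_add_iff by blast+
    then have "fle \<mu> (fsup \<mu> a b + c) (u - c + c)" using sup_least le_add_iff by blast
    then show "fle \<mu> (fsup \<mu> a b + c) u" by simp
  qed
qed

lemma abs_ge: "fle \<mu> x (fabs \<mu> x)" "fle \<mu> (- x) (fabs \<mu> x)"
  unfolding fabs_def using ub1 ub2 by auto

lemma abs_nonneg: "fle \<mu> 0 (fabs \<mu> x)"
proof -
  let ?s = "fabs \<mu> x"
  have "fle \<mu> (x + - x) (?s + ?s)" using le_add_both abs_ge by blast
  then have "fle \<mu> ((1/2::real) *\<^sub>R 0) ((1/2::real) *\<^sub>R (?s + ?s))" using le_scale[of 0 "?s + ?s" "1/2"] by simp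
  moreover have "(1/2::real) *\<^sub>R (?s + ?s) = ?s" by (simp add: scaleR_2[symmetric])
  ultimately show ?thesis by simp
qed

lemma abs_least: "fle \<mu> x u \<Longrightarrow> fle \<mu> (- x) u \<Longrightarrow> fle \<mu> (fabs \<mu> x) u"
  unfolding fabs_def using sup_least by blast

lemma le_diff_nonneg: "fle \<mu> x y \<longleftrightarrow> fle \<mu> 0 (y - x)"
  by (metis le_add_iff add.right_inverse diff_conv_add_uminus)

lemma le_sub_nonneg: "fle \<mu> 0 b \<Longrightarrow> fle \<mu> (a - b) a"
  by (metis le_add_iff add_0_left diff_add_cancel add.commute)

lemma le_neg: "fle \<mu> x y \<Longrightarrow> fle \<mu> (- y) (- x)"
  using le_add_iff2[of x y "- x - y"] by (simp add: algebra_simps)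

end

lemma theorem2p2_aux:
  fixes \<mu> :: "'a::real_vector \<Rightarrow> 'a \<Rightarrow> real" and \<nu> :: "'b::real_vector \<Rightarrow> 'b \<Rightarrow> real"
    and T :: "'a \<Rightarrow> 'b"
  assumes "fuzzy_riesz_space \<mu>" and "fuzzy_riesz_space \<nu>" and "fuzzy_riesz_hom \<mu> \<nu> T"
  shows "(\<forall>x. fle \<nu> 0 (T x) \<longleftrightarrow>
              (\<exists>z\<in>{z. T z = 0}. fle \<mu> 0 z \<and> fle \<mu> 0 (x + z)))
       \<and> (\<forall>x y. fle \<nu> (T y) (T x) \<longleftrightarrow>
              (\<exists>w. fle \<mu> x w \<and> fle \<mu> y w \<and> T w = T x))
       \<and> (\<forall>x y. fle \<nu> (fabs \<nu> (T x)) (fabs \<nu> (T y)) \<longleftrightarrow>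
              (\<exists>w\<in>{w. T w = 0}. fle \<mu> (fabs \<mu> w) (fabs \<mu> x) \<and> fle \<mu> (fabs \<mu> (x - w)) (fabs \<mu> y)))"
proof -
  interpret E: frs \<mu> by unfold_locales (rule assms(1))
  interpret F: frs \<nu> by unfold_locales (rule assms(2))
  have lin: "linear T" and hom: "\<And>x y. T (fsup \<mu> x y) = fsup \<nu> (T x) (T y)"
    using assms(3) unfolding fuzzy_riesz_hom_def by auto
  have T0: "T 0 = 0" using lin by (rule real_vector.linear_0)
  have Tadd: "\<And>x y. T (x + y) = T x + T y" using lin by (rule real_vector.linear_add)
  have Tdiff: "\<And>x y. T (x - y) = T x - T y" using lin by (rule real_vector.linear_diff)
  have Tneg: "\<And>x. T (- x) = - T x" using lin by (rule real_vector.linear_neg)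
  have pos: "fle \<nu> 0 (T x)" if "fle \<mu> 0 x" for x
  proof -
    have "T x = T (fsup \<mu> x 0)" using E.sup_eq_left[OF that] by simp
    also have "\<dots> = fsup \<nu> (T x) 0" using hom T0 by simp
    finally show ?thesis using F.ub2 by metis
  qed
  have mono: "fle \<nu> (T x) (T y)" if "fle \<mu> x y" for x y
    using pos[of "y - x"] that E.le_diff_nonneg F.le_diff_nonneg Tdiff by metis
  have Tabs: "T (fabs \<mu> x) = fabs \<nu> (T x)" for x
    unfolding fabs_def using hom Tneg by simp
  have P1: "fle \<nu> 0 (T x) \<longleftrightarrow> (\<exists>z\<in>{z. T z = 0}. fle \<mu> 0 z \<and> fle \<mu> 0 (x + z))" for x
  proof
    assume h: "fle \<nu> 0 (T x)"
    define z where "z = fsup \<mu> (- x) 0"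
    have "T z = fsup \<nu> (- T x) 0" unfolding z_def using hom Tneg T0 by simp
    also have "\<dots> = 0" using h F.sup_eq_right F.le_neg[OF h] by simp
    finally have "T z = 0" .
    moreover have "fle \<mu> 0 z" unfolding z_def using E.ub2 .
    moreover have "x + z = fsup \<mu> 0 x"
      unfolding z_def using E.sup_translate[of "- x" x 0] by (simp add: add.commute)
    then have "fle \<mu> 0 (x + z)" using E.ub1 by simp
    ultimately show "\<exists>z\<in>{z. T z = 0}. fle \<mu> 0 z \<and> fle \<mu> 0 (x + z)" by blast
  next
    assume "\<exists>z\<in>{z. T z = 0}. fle \<mu> 0 z \<and> fle \<mu> 0 (x + z)"
    then obtain z where "T z = 0" "fle \<mu> 0 (x + z)" by blast
    then show "fle \<nu> 0 (T x)" using pos[of "x + z"] Tadd by simp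
  qed
  have P2: "fle \<nu> (T y) (T x) \<longleftrightarrow> (\<exists>w. fle \<mu> x w \<and> fle \<mu> y w \<and> T w = T x)" for x y
  proof
    assume h: "fle \<nu> (T y) (T x)"
    have "T (fsup \<mu> x y) = T x" using hom F.sup_eq_left[OF h] by simp
    then show "\<exists>w. fle \<mu> x w \<and> fle \<mu> y w \<and> T w = T x" using E.ub1 E.ub2 by blast
  next
    assume "\<exists>w. fle \<mu> x w \<and> fle \<mu> y w \<and> T w = T x"
    then show "fle \<nu> (T y) (T x)" using mono by metis
  qed
  have P3: "fle \<nu> (fabs \<nu> (T x)) (fabs \<nu> (T y)) \<longleftrightarrow>
      (\<exists>w\<in>{w. T w = 0}. fle \<mu> (fabs \<mu> w) (fabs \<mu> x) \<and> fle \<mu> (fabs \<mu> (x - w)) (fabs \<mu> y))" for x y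
  proof
    assume h: "fle \<nu> (fabs \<nu> (T x)) (fabs \<nu> (T y))"
    define a where "a = fabs \<mu> y"
    define p where "p = fsup \<mu> x 0"
    define n where "n = fsup \<mu> (- x) 0"
    define w1 where "w1 = fsup \<mu> (p - a) 0"
    define w2 where "w2 = fsup \<mu> (n - a) 0"
    define w where "w = w1 - w2"
    have a0: "fle \<mu> 0 a" unfolding a_def by (rule E.abs_nonneg)
    have Ta: "T a = fabs \<nu> (T y)" unfolding a_def by (rule Tabs)
    have "T p = fsup \<nu> (T x) 0" unfolding p_def using hom T0 by simp
    then have "fle \<nu> (T p) (fabs \<nu> (T x))" using F.sup_least F.abs_ge F.abs_nonneg by metis
    then have "fle \<nu> (T p) (T a)" using h Ta F.le_trans by metis
    then have "fle \<nu> (T p - T a) 0" using F.le_add_iff2[of "T p - T a" 0 "T a"] by simp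
    then have Tw1: "T w1 = 0" unfolding w1_def using hom T0 Tdiff F.sup_eq_right by metis
    have "T n = fsup \<nu> (- T x) 0" unfolding n_def using hom T0 Tneg by simp
    then have "fle \<nu> (T n) (fabs \<nu> (T x))" using F.sup_least F.abs_ge F.abs_nonneg by metis
    then have "fle \<nu> (T n) (T a)" using h Ta F.le_trans by metis
    then have "fle \<nu> (T n - T a) 0" using F.le_add_iff2[of "T n - T a" 0 "T a"] by simp
    then have Tw2: "T w2 = 0" unfolding w2_def using hom T0 Tdiff F.sup_eq_right by metis
    have Tw: "T w = 0" unfolding w_def using Tdiff Tw1 Tw2 by simp
    have p0: "fle \<mu> 0 p" "fle \<mu> x p" unfolding p_def using E.ub1 E.ub2 by auto
    have n0: "fle \<mu> 0 n" "fle \<mu> (- x) n" unfolding n_def using E.ub1 E.ub2 by auto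
    have w10: "fle \<mu> 0 w1" "fle \<mu> (p - a) w1" unfolding w1_def using E.ub1 E.ub2 by auto
    have w20: "fle \<mu> 0 w2" "fle \<mu> (n - a) w2" unfolding w2_def using E.ub1 E.ub2 by auto
    have w1p: "fle \<mu> w1 p" unfolding w1_def using E.sup_least E.le_sub_nonneg a0 p0 by blast
    have w2n: "fle \<mu> w2 n" unfolding w2_def using E.sup_least E.le_sub_nonneg a0 n0 by blast
    have px: "fle \<mu> p (fabs \<mu> x)" unfolding p_def using E.sup_least E.abs_ge E.abs_nonneg by blast
    have nx: "fle \<mu> n (fabs \<mu> x)" unfolding n_def using E.sup_least E.abs_ge E.abs_nonneg by blast
    have "fle \<mu> w (fabs \<mu> x)"
      using E.le_sub_nonneg[OF w20(1), of w1] w1p px E.le_trans unfolding w_def by blast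
    moreover have "fle \<mu> (- w) (fabs \<mu> x)"
      using E.le_sub_nonneg[OF w10(1), of w2] w2n nx E.le_trans unfolding w_def
      by (metis minus_diff_eq)
    ultimately have c1: "fle \<mu> (fabs \<mu> w) (fabs \<mu> x)" by (rule E.abs_least)
    have pxn: "p = x + n"
      proof -
      have "fsup \<mu> 0 x = fsup \<mu> (- x) 0 + x" using E.sup_translate[of "- x" x 0] by simp
      then show ?thesis unfolding p_def n_def using E.sup_comm[of x 0] by (simp add: add.commute)
    qed
    have xw: "x - w = (p - w1) - (n - w2)" unfolding w_def using pxn by (simp add: algebra_simps)
    have A1: "fle \<mu> (p - w1) a"
      using E.le_add_iff2[of "p - a" w1 "a - w1"] w10(2) by (simp add: algebra_simps)
    have A2: "fle \<mu> (n - w2) a"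
      using E.le_add_iff2[of "n - a" w2 "a - w2"] w20(2) by (simp add: algebra_simps)
    have B1: "fle \<mu> 0 (p - w1)" using w1p E.le_diff_nonneg by blast
    have B2: "fle \<mu> 0 (n - w2)" using w2n E.le_diff_nonneg by blast
    have "fle \<mu> (x - w) a" unfolding xw using E.le_sub_nonneg[OF B2] A1 E.le_trans by blast
    moreover have "fle \<mu> (- (x - w)) a" unfolding xw
      using E.le_sub_nonneg[OF B1, of "n - w2"] A2 E.le_trans by (metis minus_diff_eq)
    ultimately have c2: "fle \<mu> (fabs \<mu> (x - w)) (fabs \<mu> y)" unfolding a_def by (rule E.abs_least)
    show "\<exists>w\<in>{w. T w = 0}. fle \<mu> (fabs \<mu> w) (fabs \<mu> x) \<and> fle \<mu> (fabs \<mu> (x - w)) (fabs \<mu> y)"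
      using Tw c1 c2 by blast
  next
    assume "\<exists>w\<in>{w. T w = 0}. fle \<mu> (fabs \<mu> w) (fabs \<mu> x) \<and> fle \<mu> (fabs \<mu> (x - w)) (fabs \<mu> y)"
    then obtain w where "T w = 0" "fle \<mu> (fabs \<mu> (x - w)) (fabs \<mu> y)" by blast
    then show "fle \<nu> (fabs \<nu> (T x)) (fabs \<nu> (T y))"
      using mono[of "fabs \<mu> (x - w)" "fabs \<mu> y"] Tabs Tdiff by simp
  qed
  show ?thesis using P1 P2 P3 by blast
qed

theorem theorem2p2:
  fixes \<mu> :: "'a::real_vector \<Rightarrow> 'a \<Rightarrow> real" and \<nu> :: "'b::real_vector \<Rightarrow> 'b \<Rightarrow> real"
    and T :: "'a \<Rightarrow> 'b"
  assumes "fuzzy_riesz_space \<mu>" and "fuzzy_riesz_space \<nu>" and "fuzzy_riesz_hom \<mu> \<nu> T"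
  shows "(\<forall>x. \<nu> 0 (T x) > 1/2 \<longleftrightarrow>
              (\<exists>z\<in>{z. T z = 0}. \<mu> 0 z > 1/2 \<and> \<mu> 0 (x + z) > 1/2))
       \<and> (\<forall>x y. \<nu> (T y) (T x) > 1/2 \<longleftrightarrow>
              (\<exists>w. \<mu> x w > 1/2 \<and> \<mu> y w > 1/2 \<and> T w = T x))
       \<and> (\<forall>x y. \<nu> (fabs \<nu> (T x)) (fabs \<nu> (T y)) > 1/2 \<longleftrightarrow>
              (\<exists>w\<in>{w. T w = 0}. \<mu> (fabs \<mu> w) (fabs \<mu> x) > 1/2 \<and> \<mu> (fabs \<mu> (x - w)) (fabs \<mu> y) > 1/2))"
  using theorem2p2_aux[OF assms] unfolding fle_def .

end
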